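(* Let $\mathcal{T}$ be a planar triangulation, $m\in\mathbb{Z}_{\ge0}$, $r\in\mathbb{Z}_{\ge-1}$, and $\mathbf{r}$ a smoothness distribution with values in $\{r,-1\}$ on interior edges. Let $\sigma$ be a face bounded by interior edges $\tau_1,\tau_2,\tau_3$ with $\mathbf r(\tau_i)=r$, let $\gamma_i=\tau_i\cap\tau_{i+1}$ (indices cyclic in $1,2,3$) be interior vertices with $\mathbf r(\tau)\ne-1$ for every edge $\tau$ incident on any $\gamma_i$, and let $\ell_i$ be an affine-linear form vanishing on $\tau_i$. Let $$\phi:\bigoplus_{i=1}^3{\mathcal{P}}_m/\langle\ell_i^{r+1}\rangle\longrightarrow\bigoplus_{i=1}^3{\mathcal{P}}_m/\mathfrak{J}^{\mathbf r}_{\gamma_i},\qquad (a_1,a_2,a_3)\mapsto(-a_1+a_2,\,-a_2+a_3,\,a_1-a_3),$$ and let $\mathbf s$ agree with $\mathbf r$ except that $\mathbf s(\tau_i)=-1$ for $i=1,2,3$. Then the cokernel of $\phi$, and hence $H_0(\mathcal{I}^{\mathbf s}/\mathcal{I}^{\mathbf r})$, is isomorphic to ${\mathcal{P}}_m/(\mathfrak{J}^{\mathbf r}_{\gamma_1}+\mathfrak{J}^{\mathbf r}_{\gamma_2}+\mathfrak{J}^{\mathbf r}_{\gamma_3})$.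
   Context: $\mathcal{T}$ is a finite planar triangulation of a closed polygonal region $\Omega\subset\mathbb{R}^2$ (possibly not simply connected). An edge or vertex is interior if it is not contained in $\partial\Omega$; $\mathcal{T}^\circ_1,\mathcal{T}^\circ_0$ denote interior edges and vertices. ${\mathcal{P}}_m$ is the space of real bivariate polynomials of total degree at most $m$; $\langle f_1,\dots,f_k\rangle$ denotes the subspace of ${\mathcal{P}}_m$ of all polynomial combinations $\sum g_if_i$ lying in ${\mathcal{P}}_m$. A smoothness distribution is a map $\mathbf{r}:\mathcal{T}^\circ_1\to\mathbb{Z}_{\ge -1}$. For $\tau\in\mathcal{T}^\circ_1$ with vanishing affine-linear form $\ell_\tau$, $\mathfrak{J}^{\mathbf r}_\tau=\langle \ell_\tau^{\mathbf r(\tau)+1}\rangle$ (equal to ${\mathcal{P}}_m$ if $\mathbf r(\tau)=-1$), and for $\gamma\in\mathcal{T}^\circ_0$, $\mathfrak{J}^{\mathbf r}_\gamma=\sum_{\tau\ni\gamma}\mathfrak{J}^{\mathbf r}_\tau$. $\mathcal{I}^{\mathbf r}$ is the chain complex $0\to\bigoplus_{\tau\in\mathcal{T}^\circ_1}\mathfrak{J}^{\mathbf r}_\tau\to\bigoplus_{\gamma\in\mathcal{T}^\circ_0}\mathfrak{J}^{\mathbf r}_\gamma$ (degrees $2,1,0$), whose nonzero map is the cellular boundary map of $\mathcal{T}$ relative to $\partial\Omega$ (signs $\pm1$ from fixed edge orientations). If $\mathbf s\le\mathbf r$ pointwise then $\mathcal{I}^{\mathbf r}\subseteq\mathcal{I}^{\mathbf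 s}$ and $\mathcal{I}^{\mathbf s}/\mathcal{I}^{\mathbf r}$ is the quotient complex. *)

theory Defs
  imports "HOL-Analysis.Analysis" "HOL-Computational_Algebra.Polynomial"
    "HOL-Library.Function_Algebras"
begin

type_synonym pt = "real \<times> real"

text \<open>Real bivariate polynomials: polynomials in y whose coefficients are
  polynomials in x.\<close>
type_synonym bipoly = "real poly poly"

definition eval2 :: "bipoly \<Rightarrow> pt \<Rightarrow> real" where
  "eval2 f p = poly (map_poly (\<lambda>c. poly c (fst p)) f) (snd p)"

definition Pm :: "nat \<Rightarrow> bipoly set" where
  "Pm m = {f. \<forall>j. coeff f j \<noteq> 0 \<longrightarrow> degree (coeff f j) + j \<le> m}"

definition psc :: "real \<Rightarrow> bipoly \<Rightarrow> bipoly" where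
  "psc c f = smult [:c:] f"

definition fsc :: "real \<Rightarrow> ('a \<Rightarrow> bipoly) \<Rightarrow> ('a \<Rightarrow> bipoly)" where
  "fsc c g = (\<lambda>x. psc c (g x))"

definition gen1 :: "nat \<Rightarrow> bipoly \<Rightarrow> bipoly set" where
  "gen1 m f = {h \<in> Pm m. \<exists>g. h = g * f}"

text \<open>Affine-linear form vanishing on the line through p and q.\<close>
definition line_form :: "pt \<Rightarrow> pt \<Rightarrow> bipoly" where
  "line_form p q = [:[: (fst q - fst p) * snd p - (snd q - snd p) * fst p, snd q - snd p :],
                     [: fst p - fst q :]:]"

definition region :: "pt set set \<Rightarrow> pt set" where
  "region T = (\<Union>\<sigma>\<in>T. convex hull \<sigma>)"

definition triangulation :: "pt set set \<Rightarrow> bool" where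
  "triangulation T \<longleftrightarrow> finite T \<and> T \<noteq> {} \<and>
     (\<forall>\<sigma>\<in>T. card \<sigma> = 3 \<and> \<not> collinear \<sigma>) \<and>
     (\<forall>\<sigma>\<in>T. \<forall>\<sigma>'\<in>T. convex hull \<sigma> \<inter> convex hull \<sigma>' = convex hull (\<sigma> \<inter> \<sigma>')) \<and>
     connected (region T)"

definition edges :: "pt set set \<Rightarrow> pt set set" where
  "edges T = {e. \<exists>\<sigma>\<in>T. e \<subseteq> \<sigma> \<and> card e = 2}"

definition int_edges :: "pt set set \<Rightarrow> pt set set" where
  "int_edges T = {e \<in> edges T. \<not> (convex hull e \<subseteq> frontier (region T))}"

definition int_vertices :: "pt set set \<Rightarrow> pt set" where
  "int_vertices T = {v \<in> \<Union>T. v \<notin> frontier (region T)}"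

definition edges_at :: "pt set set \<Rightarrow> pt \<Rightarrow> pt set set" where
  "edges_at T v = {e \<in> int_edges T. v \<in> e}"

definition smoothness_distribution :: "pt set set \<Rightarrow> (pt set \<Rightarrow> int) \<Rightarrow> bool" where
  "smoothness_distribution T r \<longleftrightarrow> (\<forall>e\<in>int_edges T. r e \<ge> -1)"

text \<open>J^r_tau = < l_tau^(r(tau)+1) > (all of P_m when r(tau) = -1).\<close>
definition J_edge :: "nat \<Rightarrow> (pt set \<Rightarrow> int) \<Rightarrow> pt set \<Rightarrow> bipoly set" where
  "J_edge m r e = {h \<in> Pm m. \<exists>p q g. e = {p, q} \<and> h = g * line_form p q ^ nat (r e + 1)}"

definition J_vertex :: "nat \<Rightarrow> pt set set \<Rightarrow> (pt set \<Rightarrow> int) \<Rightarrow> pt \<Rightarrow> bipoly set" where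
  "J_vertex m T r v = {h. \<exists>f. (\<forall>e\<in>edges_at T v. f e \<in> J_edge m r e) \<and>
                              h = (\<Sum>e\<in>edges_at T v. f e)}"

text \<open>Cellular boundary (relative to the boundary of the region) of a 1-chain,
  for an orientation given by the head head e of each edge e.\<close>
definition bd :: "pt set set \<Rightarrow> (pt set \<Rightarrow> pt) \<Rightarrow> (pt set \<Rightarrow> bipoly) \<Rightarrow> pt \<Rightarrow> bipoly" where
  "bd T head f v = (\<Sum>e\<in>edges_at T v. if head e = v then f e else - f e)"

text \<open>Degree-0 and degree-1 chains of I^r (representatives, zero off the index set).\<close>
definition C0 :: "nat \<Rightarrow> pt set set \<Rightarrow> (pt set \<Rightarrow> int) \<Rightarrow> (pt \<Rightarrow> bipoly) set" where
  "C0 m T r = {g. \<forall>v. (v \<in> int_vertices T \<longrightarrow> g v \<in> J_vertex m T r v) \<and>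
                       (v \<notin> int_vertices T \<longrightarrow> g v = 0)}"

definition C1 :: "nat \<Rightarrow> pt set set \<Rightarrow> (pt set \<Rightarrow> int) \<Rightarrow> (pt set \<Rightarrow> bipoly) set" where
  "C1 m T r = {f. \<forall>e. (e \<in> int_edges T \<longrightarrow> f e \<in> J_edge m r e) \<and>
                       (e \<notin> int_edges T \<longrightarrow> f e = 0)}"

text \<open>H_0(I^s / I^r) = C0(I^s) / (C0(I^r) + bd C1(I^s)); this is the subspace
  of C0(I^s) that is divided out.\<close>
definition H0_rel :: "nat \<Rightarrow> pt set set \<Rightarrow> (pt set \<Rightarrow> pt) \<Rightarrow> (pt set \<Rightarrow> int) \<Rightarrow> (pt set \<Rightarrow> int)
    \<Rightarrow> (pt \<Rightarrow> bipoly) set" where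
  "H0_rel m T head s r = {g \<in> C0 m T s. \<exists>f \<in> C1 m T s. \<forall>v \<in> int_vertices T.
                          g v - bd T head f v \<in> J_vertex m T r v}"

text \<open>V/W and V'/W' are isomorphic as real vector spaces, witnessed by a
  linear map F : V \<rightarrow> V' inducing a bijection V/W \<rightarrow> V'/W'.\<close>
definition quot_iso :: "(real \<Rightarrow> 'a \<Rightarrow> 'a) \<Rightarrow> (real \<Rightarrow> 'b \<Rightarrow> 'b) \<Rightarrow>
    'a::ab_group_add set \<Rightarrow> 'a set \<Rightarrow> 'b::ab_group_add set \<Rightarrow> 'b set \<Rightarrow> bool" where
  "quot_iso sa sb V W V' W' \<longleftrightarrow> (\<exists>F.
     (\<forall>x\<in>V. F x \<in> V') \<and>
     (\<forall>x\<in>V. \<forall>y\<in>V. F (x + y) = F x + F y) \<and>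
     (\<forall>c. \<forall>x\<in>V. F (sa c x) = sb c (F x)) \<and>
     (\<forall>x\<in>V. F x \<in> W' \<longleftrightarrow> x \<in> W) \<and>
     (\<forall>y\<in>V'. \<exists>x\<in>V. y - F x \<in> W'))"

text \<open>Representatives of the direct sum of three copies of P_m (indices 0,1,2).\<close>
definition Pm3 :: "nat \<Rightarrow> (nat \<Rightarrow> bipoly) set" where
  "Pm3 m = {a. \<forall>i. (i < 3 \<longrightarrow> a i \<in> Pm m) \<and> (\<not> i < 3 \<longrightarrow> a i = 0)}"

text \<open>phi(a_1,a_2,a_3) = (-a_1+a_2, -a_2+a_3, a_1-a_3), indices shifted to 0,1,2.\<close>
definition phi_rep :: "(nat \<Rightarrow> bipoly) \<Rightarrow> nat \<Rightarrow> bipoly" where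
  "phi_rep a i = (if i < 3 then - a i + a (Suc i mod 3) else 0)"

text \<open>Subspace of representatives in the codomain of phi that vanish in coker phi:
  b with b_i \<equiv> phi(a)_i mod J_(gamma_i) for some a.\<close>
definition coker_rel :: "nat \<Rightarrow> (nat \<Rightarrow> bipoly set) \<Rightarrow> (nat \<Rightarrow> bipoly) set" where
  "coker_rel m J = {b \<in> Pm3 m. \<exists>a \<in> Pm3 m. \<forall>i<3. b i - phi_rep a i \<in> J i}"

end

theory Submission
  imports Defs
begin

lemma Pm_add: assumes "f \<in> Pm m" "g \<in> Pm m" shows "f + g \<in> Pm m"
  unfolding Pm_def
proof (intro CollectI allI impI)
  fix j assume nz: "coeff (f + g) j \<noteq> 0"
  have d: "degree (coeff f j + coeff g j) \<le> max (degree (coeff f j)) (degree (coeff g j))"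
    by (rule degree_add_le_max)
  show "degree (coeff (f + g) j) + j \<le> m"
  proof (cases "coeff f j = 0")
    case True then show ?thesis using nz assms(2) by (simp add: Pm_def)
  next
    case F: False
    show ?thesis
    proof (cases "coeff g j = 0")
      case True then show ?thesis using nz assms(1) by (simp add: Pm_def)
    next
      case False
      have a: "degree (coeff f j) + j \<le> m" using F assms(1) by (simp add: Pm_def)
      have b: "degree (coeff g j) + j \<le> m" using False assms(2) by (simp add: Pm_def)
      show ?thesis using d a b by (simp add: max_def split: if_splits)
    qed
  qed
qed

lemma Pm_uminus: "f \<in> Pm m \<Longrightarrow> - f \<in> Pm m"
  by (simp add: Pm_def)

lemma Pm_zero: "0 \<in> Pm m" by (simp add: Pm_def)

lemma Pm_diff: "f \<in> Pm m \<Longrightarrow> g \<in> Pm m \<Longrightarrow> f - g \<in> Pm m"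
  using Pm_add[OF _ Pm_uminus] by (metis diff_conv_add_uminus)

lemma Pm_sum: "(\<And>x. x \<in> A \<Longrightarrow> f x \<in> Pm m) \<Longrightarrow> sum f A \<in> Pm m"
  by (induction A rule: infinite_finite_induct) (auto simp: Pm_zero Pm_add)

lemma Pm_psc: "f \<in> Pm m \<Longrightarrow> psc c f \<in> Pm m"
proof -
  assume f: "f \<in> Pm m"
  show ?thesis unfolding Pm_def psc_def
  proof (intro CollectI allI impI)
    fix j assume nz: "coeff (smult [:c:] f) j \<noteq> 0"
    then have "coeff f j \<noteq> 0" by simp
    then have "degree (coeff f j) + j \<le> m" using f by (simp add: Pm_def)
    moreover have "degree (coeff (smult [:c:] f) j) \<le> degree (coeff f j)"
      by (simp add: degree_smult_le)
    ultimately show "degree (coeff (smult [:c:] f) j) + j \<le> m" by simp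
  qed
qed

lemma lf_swap: "line_form q p = - line_form p q"
  by (simp add: line_form_def algebra_simps)

lemma J_edge_Pm: "J_edge m r e \<subseteq> Pm m" by (auto simp: J_edge_def)

lemma card2E: assumes "card e = 2" obtains p q where "e = {p, q}"
  using assms by (meson card_2_iff)

lemma J_edge_zero: "card e = 2 \<Longrightarrow> 0 \<in> J_edge m r e"
  by (erule card2E) (force simp: J_edge_def Pm_zero)

lemma J_edge_uminus: "h \<in> J_edge m r e \<Longrightarrow> - h \<in> J_edge m r e"
  unfolding J_edge_def
  by (auto simp: Pm_uminus) (metis minus_mult_left)

lemma J_edge_add: assumes "h \<in> J_edge m r e" "h' \<in> J_edge m r e" shows "h + h' \<in> J_edge m r e"
proof -
  let ?n = "nat (r e + 1)"
  obtain p q g where e: "e = {p, q}" and h: "h = g * line_form p q ^ ?n" and hP: "h \<in> Pm m"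
    using assms(1) unfolding J_edge_def by blast
  obtain p' q' g' where e': "e = {p', q'}" and h': "h' = g' * line_form p' q' ^ ?n" and hP': "h' \<in> Pm m"
    using assms(2) unfolding J_edge_def by blast
  have "\<exists>g''. h' = g'' * line_form p q ^ ?n"
  proof (cases "p' = p \<and> q' = q")
    case True then show ?thesis using h' by blast
  next
    case False
    then have "p' = q" "q' = p" using e e' by (auto simp: doubleton_eq_iff)
    then have "h' = (g' * (-1) ^ ?n) * line_form p q ^ ?n"
      proof -
        have "line_form p' q' ^ ?n = (-1) ^ ?n * line_form p q ^ ?n"
          unfolding \<open>p' = q\<close> \<open>q' = p\<close> lf_swap[of q p] by (rule power_minus)
        then show ?thesis using h' by (simp only: mult.assoc)
      qed
    then show ?thesis by blast
  qed
  then obtain g'' where "h' = g'' * line_form p q ^ ?n" by blast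
  then have "h + h' = (g + g'') * line_form p q ^ ?n" using h by (simp add: algebra_simps)
  moreover have "h + h' \<in> Pm m" using hP hP' by (rule Pm_add)
  ultimately show ?thesis using e unfolding J_edge_def by blast
qed

lemma J_edge_neg1: "card e = 2 \<Longrightarrow> r e = -1 \<Longrightarrow> J_edge m r e = Pm m"
  by (erule card2E) (auto simp: J_edge_def)

lemma J_edge_cong: "r e = s e \<Longrightarrow> J_edge m r e = J_edge m s e"
  by (simp add: J_edge_def)

lemma J_vertex_zero: "(\<And>e. e \<in> edges_at T v \<Longrightarrow> card e = 2) \<Longrightarrow> 0 \<in> J_vertex m T r v"
  unfolding J_vertex_def by (rule CollectI, rule exI[of _ "\<lambda>_. 0"]) (auto intro: J_edge_zero)

lemma J_vertex_add: "h \<in> J_vertex m T r v \<Longrightarrow> h' \<in> J_vertex m T r v \<Longrightarrow> h + h' \<in> J_vertex m T r v"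
  unfolding J_vertex_def
proof (elim CollectE exE conjE, intro CollectI)
  fix f f' assume "\<forall>e\<in>edges_at T v. f e \<in> J_edge m r e" "h = sum f (edges_at T v)"
    "\<forall>e\<in>edges_at T v. f' e \<in> J_edge m r e" "h' = sum f' (edges_at T v)"
  then show "\<exists>f. (\<forall>e\<in>edges_at T v. f e \<in> J_edge m r e) \<and> h + h' = sum f (edges_at T v)"
    by (intro exI[of _ "\<lambda>e. f e + f' e"]) (auto simp: J_edge_add sum.distrib)
qed

lemma J_vertex_uminus: "h \<in> J_vertex m T r v \<Longrightarrow> - h \<in> J_vertex m T r v"
  unfolding J_vertex_def
proof (elim CollectE exE conjE, intro CollectI)
  fix f assume "\<forall>e\<in>edges_at T v. f e \<in> J_edge m r e" "h = sum f (edges_at T v)"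
  then show "\<exists>f. (\<forall>e\<in>edges_at T v. f e \<in> J_edge m r e) \<and> - h = sum f (edges_at T v)"
    by (intro exI[of _ "\<lambda>e. - f e"]) (auto simp: J_edge_uminus sum_negf)
qed

lemma J_vertex_diff: "h \<in> J_vertex m T r v \<Longrightarrow> h' \<in> J_vertex m T r v \<Longrightarrow> h - h' \<in> J_vertex m T r v"
  by (metis J_vertex_add J_vertex_uminus diff_conv_add_uminus)

lemma J_vertex_Pm: "J_vertex m T r v \<subseteq> Pm m"
  unfolding J_vertex_def using J_edge_Pm by (auto intro!: Pm_sum) (meson subsetD)

lemma J_vertex_edge: assumes "finite (edges_at T v)" "e \<in> edges_at T v" "h \<in> J_edge m r e"
  "\<And>e. e \<in> edges_at T v \<Longrightarrow> card e = 2"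
  shows "h \<in> J_vertex m T r v"
  unfolding J_vertex_def
  apply (rule CollectI, rule exI[of _ "\<lambda>e'. if e' = e then h else 0"])
  using assms by (auto intro: J_edge_zero)

lemma J_vertex_cong: "(\<And>e. e \<in> edges_at T v \<Longrightarrow> r e = s e) \<Longrightarrow> J_vertex m T r v = J_vertex m T s v"
  unfolding J_vertex_def using J_edge_cong by (metis (no_types, lifting))


lemma part1_iff: assumes x: "x \<in> Pm3 m" and P: "\<And>i. J i \<subseteq> Pm m"
  shows "x 0 + x 1 + x 2 \<in> {g0 + g1 + g2 | g0 g1 g2. g0 \<in> J 0 \<and> g1 \<in> J 1 \<and> g2 \<in> J 2}
     \<longleftrightarrow> x \<in> coker_rel m J"
proof
  assume "x 0 + x 1 + x 2 \<in> {g0 + g1 + g2 | g0 g1 g2. g0 \<in> J 0 \<and> g1 \<in> J 1 \<and> g2 \<in> J 2}"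
  then obtain g0 g1 g2 where g: "g0 \<in> J 0" "g1 \<in> J 1" "g2 \<in> J 2"
    and s: "x 0 + x 1 + x 2 = g0 + g1 + g2" by blast
  define a where "a = (\<lambda>i::nat. if i = 1 then x 0 - g0 else if i = 2 then (x 0 - g0) + (x 1 - g1) else 0)"
  have xP: "x 0 \<in> Pm m" "x 1 \<in> Pm m" "x 2 \<in> Pm m" using x by (auto simp: Pm3_def)
  have gP: "g0 \<in> Pm m" "g1 \<in> Pm m" "g2 \<in> Pm m" using g P by auto
  have aP: "a \<in> Pm3 m" unfolding Pm3_def a_def using xP gP by (auto intro!: Pm_add Pm_diff Pm_zero)
  have "\<forall>i<3. x i - phi_rep a i \<in> J i"
  proof (intro allI impI)
    fix i :: nat assume "i < 3"
    then have "i = 0 \<or> i = 1 \<or> i = 2" by auto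
    then show "x i - phi_rep a i \<in> J i"
    proof (elim disjE)
      assume "i = 0" then show ?thesis using g by (simp add: phi_rep_def a_def numeral_2_eq_2)
    next
      assume "i = 1" then show ?thesis using g by (simp add: phi_rep_def a_def numeral_2_eq_2)
    next
      assume i: "i = 2"
      have "x 2 - phi_rep a 2 = (x 0 + x 1 + x 2) - g0 - g1" by (simp add: phi_rep_def a_def algebra_simps numeral_2_eq_2)
      also have "\<dots> = g2" using s by simp
      finally show ?thesis using g i by simp
    qed
  qed
  then show "x \<in> coker_rel m J" using x aP by (auto simp: coker_rel_def)
next
  assume "x \<in> coker_rel m J"
  then obtain a where a: "a \<in> Pm3 m" "\<forall>i<3. x i - phi_rep a i \<in> J i" by (auto simp: coker_rel_def)
  have "x 0 + x 1 + x 2 = (x 0 - phi_rep a 0) + (x 1 - phi_rep a 1) + (x 2 - phi_rep a 2)"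
    by (simp add: phi_rep_def algebra_simps numeral_2_eq_2)
  moreover have "x 0 - phi_rep a 0 \<in> J 0" "x 1 - phi_rep a 1 \<in> J 1" "x 2 - phi_rep a 2 \<in> J 2"
    using a(2) by auto
  ultimately show "x 0 + x 1 + x 2 \<in> {g0 + g1 + g2 | g0 g1 g2. g0 \<in> J 0 \<and> g1 \<in> J 1 \<and> g2 \<in> J 2}"
    by blast
qed

lemma part1:
  assumes z: "\<And>i. 0 \<in> J i" and P: "\<And>i. J i \<subseteq> Pm m"
  shows "quot_iso fsc psc (Pm3 m) (coker_rel m J) (Pm m)
           {g0 + g1 + g2 | g0 g1 g2. g0 \<in> J 0 \<and> g1 \<in> J 1 \<and> g2 \<in> J 2}"
  unfolding quot_iso_def
  apply (rule exI[of _ "\<lambda>x. x 0 + x 1 + x 2"])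
  apply (intro conjI ballI allI)
  subgoal for x by (auto simp: Pm3_def intro!: Pm_add)
  subgoal for x y by (simp add: algebra_simps)
  subgoal for c x by (simp add: fsc_def psc_def smult_add_right)
  subgoal for x using part1_iff[of x m J] P by blast
  subgoal for y
    apply (rule bexI[of _ "\<lambda>i. if i = 0 then y else 0"])
    using z apply force
    by (auto simp: Pm3_def Pm_zero)
  done

lemma bd_add: "bd T head (\<lambda>e. f e + g e) v = bd T head f v + bd T head g v"
  unfolding bd_def by (simp add: sum.distrib[symmetric] if_distrib) (rule sum.cong, auto)

lemma bd_single: assumes "finite (edges_at T v)" "t \<in> int_edges T"
  shows "bd T head (\<lambda>e. if e = t then a else 0) v = (if v \<in> t then (if head t = v then a else - a) else 0)"
proof -
  have "bd T head (\<lambda>e. if e = t then a else 0) v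
      = (\<Sum>e\<in>edges_at T v. if e = t then (if head t = v then a else - a) else 0)"
    unfolding bd_def by (rule sum.cong) auto
  also have "\<dots> = (if t \<in> edges_at T v then (if head t = v then a else - a) else 0)"
    using assms(1) by (simp add: sum.delta')
  finally show ?thesis using assms(2) by (simp add: edges_at_def)
qed


lemma part2:
  fixes T :: "pt set set" and \<tau> :: "nat \<Rightarrow> pt set" and \<gamma> :: "nat \<Rightarrow> pt"
    and head :: "pt set \<Rightarrow> pt" and rr :: "pt set \<Rightarrow> int"
  assumes finE: "\<And>v. finite (edges_at T v)"
    and c2: "\<And>e. e \<in> int_edges T \<Longrightarrow> card e = 2"
    and tin0: "\<tau> 0 \<in> int_edges T" and tin1: "\<tau> 1 \<in> int_edges T" and tin2: "\<tau> 2 \<in> int_edges T"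
    and td: "\<tau> 0 \<noteq> \<tau> 1" "\<tau> 1 \<noteq> \<tau> 2" "\<tau> 0 \<noteq> \<tau> 2"
    and gd: "\<gamma> 0 \<noteq> \<gamma> 1" "\<gamma> 1 \<noteq> \<gamma> 2" "\<gamma> 0 \<noteq> \<gamma> 2"
    and t0: "\<tau> 0 = {\<gamma> 0, \<gamma> 2}" and t1: "\<tau> 1 = {\<gamma> 0, \<gamma> 1}" and t2: "\<tau> 2 = {\<gamma> 1, \<gamma> 2}"
    and gin0: "\<gamma> 0 \<in> int_vertices T" and gin1: "\<gamma> 1 \<in> int_vertices T" and gin2: "\<gamma> 2 \<in> int_vertices T"
    and hd0: "head (\<tau> 0) \<in> \<tau> 0" and hd1: "head (\<tau> 1) \<in> \<tau> 1" and hd2: "head (\<tau> 2) \<in> \<tau> 2"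
  shows "quot_iso fsc psc
           (C0 m T (\<lambda>e. if e \<in> \<tau> ` {0,1,2} then -1 else rr e))
           (H0_rel m T head (\<lambda>e. if e \<in> \<tau> ` {0,1,2} then -1 else rr e) rr)
           (Pm m) {g0 + g1 + g2 | g0 g1 g2. g0 \<in> J_vertex m T rr (\<gamma> 0) \<and>
                     g1 \<in> J_vertex m T rr (\<gamma> 1) \<and> g2 \<in> J_vertex m T rr (\<gamma> 2)}"
proof -
  define s where "s = (\<lambda>e. if e \<in> \<tau> ` {0::nat,1,2} then -1 else rr e)"
  have c2': "\<And>v e. e \<in> edges_at T v \<Longrightarrow> card e = 2" using c2 by (auto simp: edges_at_def)
  have Jz: "\<And>r v. 0 \<in> J_vertex m T r v" using c2' by (rule J_vertex_zero)
  have sneg: "s (\<tau> 0) = -1" "s (\<tau> 1) = -1" "s (\<tau> 2) = -1" by (auto simp: s_def)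
  have Jsg: "J_vertex m T s v = Pm m" if v: "v \<in> \<tau> i" "i < 3" for v i
  proof -
    have "i = 0 \<or> i = 1 \<or> i = 2" using v(2) by auto
    then have ti: "\<tau> i \<in> int_edges T" "s (\<tau> i) = -1" using tin0 tin1 tin2 sneg by auto
    have e: "\<tau> i \<in> edges_at T v" using ti(1) v(1) by (simp add: edges_at_def)
    have Je: "J_edge m s (\<tau> i) = Pm m" by (rule J_edge_neg1[of "\<tau> i" s m, OF c2[OF ti(1)] ti(2)])
    show ?thesis
    proof (rule subset_antisym[OF J_vertex_Pm], rule subsetI)
      fix y assume y: "y \<in> Pm m"
      show "y \<in> J_vertex m T s v" by (rule J_vertex_edge[OF finE e _ c2']) (simp add: Je y)
    qed
  qed
  have m0: "\<gamma> 0 \<in> \<tau> 0" "\<gamma> 1 \<in> \<tau> 1" "\<gamma> 2 \<in> \<tau> 2" using t0 t1 t2 by blast+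
  have Jsg0: "J_vertex m T s (\<gamma> 0) = Pm m" by (rule Jsg[OF m0(1)]) simp
  have Jsg1: "J_vertex m T s (\<gamma> 1) = Pm m" by (rule Jsg[OF m0(2)]) simp
  have Jsg2: "J_vertex m T s (\<gamma> 2) = Pm m" by (rule Jsg[OF m0(3)]) simp
  have Jsv: "J_vertex m T s v = J_vertex m T rr v" if "v \<notin> {\<gamma> 0, \<gamma> 1, \<gamma> 2}" for v
  proof (rule J_vertex_cong)
    fix e assume "e \<in> edges_at T v"
    then have "v \<in> e" by (simp add: edges_at_def)
    then have "e \<notin> \<tau> ` {0,1,2}" using that t0 t1 t2 by auto
    then show "s e = rr e" by (simp add: s_def)
  qed
  have bd1: "bd T head (\<lambda>e. if e = \<tau> j then a else 0) v =
      (if v \<in> \<tau> j then (if head (\<tau> j) = v then a else - a) else 0)" if "j < 3" for j a v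
  proof -
    have "j = 0 \<or> j = 1 \<or> j = 2" using that by auto
    then have "\<tau> j \<in> int_edges T" using tin0 tin1 tin2 by auto
    then show ?thesis by (intro bd_single finE)
  qed
  let ?F = "\<lambda>g::pt \<Rightarrow> bipoly. g (\<gamma> 0) + g (\<gamma> 1) + g (\<gamma> 2)"
  let ?W = "{g0 + g1 + g2 | g0 g1 g2. g0 \<in> J_vertex m T rr (\<gamma> 0) \<and>
                     g1 \<in> J_vertex m T rr (\<gamma> 1) \<and> g2 \<in> J_vertex m T rr (\<gamma> 2)}"
  have C0g: "g (\<gamma> 0) \<in> Pm m" "g (\<gamma> 1) \<in> Pm m" "g (\<gamma> 2) \<in> Pm m" if "g \<in> C0 m T s" for g
  proof -
    have *: "\<And>v. v \<in> int_vertices T \<Longrightarrow> g v \<in> J_vertex m T s v" using that unfolding C0_def by blast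
    show "g (\<gamma> 0) \<in> Pm m" using *[OF gin0] Jsg0 by simp
    show "g (\<gamma> 1) \<in> Pm m" using *[OF gin1] Jsg1 by simp
    show "g (\<gamma> 2) \<in> Pm m" using *[OF gin2] Jsg2 by simp
  qed
  have iff: "?F g \<in> ?W \<longleftrightarrow> g \<in> H0_rel m T head s rr" if g: "g \<in> C0 m T s" for g
  proof
    assume "?F g \<in> ?W"
    then obtain j0 j1 j2 where j: "j0 \<in> J_vertex m T rr (\<gamma> 0)" "j1 \<in> J_vertex m T rr (\<gamma> 1)"
      "j2 \<in> J_vertex m T rr (\<gamma> 2)" and Fg: "?F g = j0 + j1 + j2" by blast
    define c0 where "c0 = g (\<gamma> 0) - j0"
    define c2 where "c2 = g (\<gamma> 2) - j2"
    define a1 where "a1 = (if head (\<tau> 1) = \<gamma> 0 then c0 else - c0)"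
    define a2 where "a2 = (if head (\<tau> 2) = \<gamma> 2 then c2 else - c2)"
    have jP: "j0 \<in> Pm m" "j2 \<in> Pm m" using j J_vertex_Pm by blast+
    have aP: "a1 \<in> Pm m" "a2 \<in> Pm m" using C0g[OF g] jP
      by (auto simp: a1_def a2_def c0_def c2_def intro!: Pm_diff Pm_uminus)
    define f where "f = (\<lambda>e. (if e = \<tau> 1 then a1 else 0) + (if e = \<tau> 2 then a2 else 0))"
    have fC1: "f \<in> C1 m T s"
      unfolding C1_def
    proof (intro CollectI allI conjI impI)
      fix e assume e: "e \<in> int_edges T"
      show "f e \<in> J_edge m s e"
      proof (cases "e = \<tau> 1 \<or> e = \<tau> 2")
        case True
        then have "s e = -1" using sneg by auto
        then have "J_edge m s e = Pm m" by (rule J_edge_neg1[of e s m, OF c2[OF e]])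
        then show ?thesis using True aP td by (auto simp: f_def)
      next
        case False then show ?thesis using J_edge_zero[OF c2[OF e]] by (simp add: f_def)
      qed
    next
      fix e assume "e \<notin> int_edges T"
      then show "f e = 0" using tin1 tin2 by (auto simp: f_def)
    qed
    have bdf: "bd T head f v = (if v \<in> \<tau> 1 then (if head (\<tau> 1) = v then a1 else - a1) else 0)
        + (if v \<in> \<tau> 2 then (if head (\<tau> 2) = v then a2 else - a2) else 0)" for v
      unfolding f_def bd_add using bd1[of 1] bd1[of 2] by simp
    have "\<forall>v\<in>int_vertices T. g v - bd T head f v \<in> J_vertex m T rr v"
    proof
      fix v assume v: "v \<in> int_vertices T"
      consider "v = \<gamma> 0" | "v = \<gamma> 1" | "v = \<gamma> 2" | "v \<notin> {\<gamma> 0, \<gamma> 1, \<gamma> 2}" by auto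
      then show "g v - bd T head f v \<in> J_vertex m T rr v"
      proof cases
        case 1
        have "bd T head f v = c0" unfolding bdf using 1 t1 t2 gd
          by (auto simp: a1_def)
        then show ?thesis using 1 j by (simp add: c0_def)
      next
        case 2
        have h1: "head (\<tau> 1) = \<gamma> 0 \<or> head (\<tau> 1) = \<gamma> 1" using hd1 t1 by auto
        have h2: "head (\<tau> 2) = \<gamma> 1 \<or> head (\<tau> 2) = \<gamma> 2" using hd2 t2 by auto
        have "bd T head f v = - c0 - c2" unfolding bdf using 2 t1 t2 gd h1 h2
          by (auto simp: a1_def a2_def)
        then have "g v - bd T head f v = j1" using 2 Fg by (simp add: c0_def c2_def algebra_simps)
        then show ?thesis using 2 j by simp
      next
        case 3
        have "bd T head f v = c2" unfolding bdf using 3 t1 t2 gd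
          by (auto simp: a2_def)
        then show ?thesis using 3 j by (simp add: c2_def)
      next
        case 4
        have "bd T head f v = 0" unfolding bdf using 4 t1 t2 by auto
        moreover have "g v \<in> J_vertex m T s v" using g v unfolding C0_def by blast
        ultimately show ?thesis using Jsv[OF 4] by simp
      qed
    qed
    then show "g \<in> H0_rel m T head s rr" using g fC1 unfolding H0_rel_def by blast
  next
    assume "g \<in> H0_rel m T head s rr"
    then obtain f where f: "f \<in> C1 m T s"
      and H: "\<forall>v\<in>int_vertices T. g v - bd T head f v \<in> J_vertex m T rr v"
      unfolding H0_rel_def by blast
    define f' where "f' = (\<lambda>e. if e \<in> {\<tau> 0, \<tau> 1, \<tau> 2} then 0 else f e)"
    define d where "d = (\<lambda>j e. if e = \<tau> j then f (\<tau> j) else 0)"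
    have fdec: "f = (\<lambda>e. ((f' e + d 0 e) + d 1 e) + d 2 e)"
      by (rule ext) (use td in \<open>auto simp: f'_def d_def\<close>)
    have bdf: "bd T head f v = bd T head f' v + bd T head (d 0) v + bd T head (d 1) v + bd T head (d 2) v" for v
      by (subst fdec) (simp only: bd_add)
    have bdd: "bd T head (d j) v = (if v \<in> \<tau> j then (if head (\<tau> j) = v then f (\<tau> j) else - f (\<tau> j)) else 0)"
      if "j < 3" for j v
      unfolding d_def using bd1[OF that] .
    have bdf': "bd T head f' v \<in> J_vertex m T rr v" for v
      unfolding bd_def J_vertex_def
    proof (intro CollectI exI[of _ "\<lambda>e. if head e = v then f' e else - f' e"] conjI ballI refl)
      fix e assume e: "e \<in> edges_at T v"
      then have eI: "e \<in> int_edges T" by (simp add: edges_at_def)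
      have "f' e \<in> J_edge m rr e"
      proof (cases "e \<in> {\<tau> 0, \<tau> 1, \<tau> 2}")
        case True then show ?thesis using J_edge_zero[OF c2[OF eI]] by (simp add: f'_def)
      next
        case False
        then have "s e = rr e" by (auto simp: s_def)
        moreover have "f e \<in> J_edge m s e" using f eI unfolding C1_def by blast
        ultimately have "f e \<in> J_edge m rr e" using J_edge_cong[of s e rr m] by simp
        then show ?thesis using False by (simp add: f'_def)
      qed
      then show "(if head e = v then f' e else - f' e) \<in> J_edge m rr e"
        by (simp add: J_edge_uminus)
    qed
    have h0: "head (\<tau> 0) = \<gamma> 0 \<or> head (\<tau> 0) = \<gamma> 2" using hd0 t0 by auto
    have h1: "head (\<tau> 1) = \<gamma> 0 \<or> head (\<tau> 1) = \<gamma> 1" using hd1 t1 by auto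
    have h2: "head (\<tau> 2) = \<gamma> 1 \<or> head (\<tau> 2) = \<gamma> 2" using hd2 t2 by auto
    define D where "D = (\<lambda>j v. bd T head (d j) v)"
    have Dv: "D j v = (if v \<in> \<tau> j then (if head (\<tau> j) = v then f (\<tau> j) else - f (\<tau> j)) else 0)"
      if "j < 3" for j v
      unfolding D_def by (rule bdd[OF that])
    have z1: "D 0 (\<gamma> 1) = 0" using Dv[of 0 "\<gamma> 1"] t0 gd by auto
    have z2: "D 1 (\<gamma> 2) = 0" using Dv[of 1 "\<gamma> 2"] t1 gd by auto
    have z3: "D 2 (\<gamma> 0) = 0" using Dv[of 2 "\<gamma> 0"] t2 gd by auto
    have p0: "D 0 (\<gamma> 2) = - D 0 (\<gamma> 0)"
      using Dv[of 0 "\<gamma> 0"] Dv[of 0 "\<gamma> 2"] t0 gd h0 by auto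
    have p1: "D 1 (\<gamma> 1) = - D 1 (\<gamma> 0)"
      using Dv[of 1 "\<gamma> 0"] Dv[of 1 "\<gamma> 1"] t1 gd h1 by auto
    have p2: "D 2 (\<gamma> 2) = - D 2 (\<gamma> 1)"
      using Dv[of 2 "\<gamma> 1"] Dv[of 2 "\<gamma> 2"] t2 gd h2 by auto
    define S where "S = (\<lambda>i. D 0 (\<gamma> i) + D 1 (\<gamma> i) + D 2 (\<gamma> i))"
    have zero: "S 0 + S 1 + S 2 = 0"
      unfolding S_def z1 z2 z3 p0 p1 p2 by (simp add: algebra_simps)
    define k where "k = (\<lambda>i. (g (\<gamma> i) - bd T head f (\<gamma> i)) + bd T head f' (\<gamma> i))"
    have kJ: "k i \<in> J_vertex m T rr (\<gamma> i)" if "i \<in> {0,1,2}" for i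
    proof -
      have "\<gamma> i \<in> int_vertices T" using that gin0 gin1 gin2 by auto
      then show ?thesis unfolding k_def using H bdf' by (intro J_vertex_add) auto
    qed
    have kk: "k i = g (\<gamma> i) - S i" for i
    proof -
      have "bd T head f (\<gamma> i) = bd T head f' (\<gamma> i) + S i"
        unfolding S_def D_def bdf by (simp only: add.assoc)
      then show ?thesis unfolding k_def by simp
    qed
    have "k 0 + k 1 + k 2 = ?F g - (S 0 + S 1 + S 2)" unfolding kk by (simp add: algebra_simps)
    then have "?F g = k 0 + k 1 + k 2" using zero by simp
    then show "?F g \<in> ?W" using kJ[of 0] kJ[of 1] kJ[of 2] by blast
  qed
  have "quot_iso fsc psc (C0 m T s) (H0_rel m T head s rr) (Pm m) ?W"
    unfolding quot_iso_def
    apply (rule exI[of _ ?F])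
    apply (intro conjI ballI allI)
    subgoal for g using C0g[of g] by (auto intro!: Pm_add)
    subgoal for x y by (simp add: algebra_simps)
    subgoal for c x by (simp add: fsc_def psc_def smult_add_right)
    subgoal for g using iff[of g] by blast
    subgoal for y
    proof (rule bexI[of _ "\<lambda>v. if v = \<gamma> 0 then y else 0"])
      assume y: "y \<in> Pm m"
      have "y - ?F (\<lambda>v. if v = \<gamma> 0 then y else 0) = 0 + 0 + 0" using gd by simp
      then show "y - ?F (\<lambda>v. if v = \<gamma> 0 then y else 0) \<in> ?W"
        using Jz by blast
      show "(\<lambda>v. if v = \<gamma> 0 then y else 0) \<in> C0 m T s"
        unfolding C0_def using y Jsg0 gin0 Jz by auto
    qed
    done
  then show ?thesis unfolding s_def .
qed


lemma two_elem: assumes "card A = 2" "w \<in> A" obtains a where "A = {w, a}" "a \<noteq> w"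
proof -
  obtain p q where pq: "A = {p, q}" "p \<noteq> q" using assms(1) unfolding card_2_iff by blast
  show ?thesis
  proof (cases "w = p")
    case True
    show ?thesis by (rule that[of q]) (use pq True in auto)
  next
    case False then have "w = q" using pq assms(2) by blast
    show ?thesis by (rule that[of p]) (use pq \<open>w = q\<close> in auto)
  qed
qed

lemma no_common:
  assumes "card S = 3" "A \<subseteq> S" "B \<subseteq> S" "C \<subseteq> S" "card A = 2" "card B = 2" "card C = 2"
    "A \<noteq> B" "B \<noteq> C" "A \<noteq> C" "w \<in> A" "w \<in> B" "w \<in> C"
  shows False
proof -
  obtain a where a: "A = {w, a}" "a \<noteq> w" using two_elem[OF assms(5) assms(11)] by blast
  obtain b where b: "B = {w, b}" "b \<noteq> w" using two_elem[OF assms(6) assms(12)] by blast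
  obtain c where c: "C = {w, c}" "c \<noteq> w" using two_elem[OF assms(7) assms(13)] by blast
  have "a \<noteq> b" "b \<noteq> c" "a \<noteq> c" using a b c assms(8-10) by auto
  then have "card {w, a, b, c} = 4" using a b c by auto
  moreover have "{w, a, b, c} \<subseteq> S" using a b c assms(2-4) by auto
  moreover have "finite S" using assms(1) using card.infinite by force
  ultimately show False using card_mono[of S "{w, a, b, c}"] assms(1) by simp
qed

lemma config:
  assumes "card S = 3" "A \<subseteq> S" "B \<subseteq> S" "C \<subseteq> S" "card A = 2" "card B = 2" "card C = 2"
    "A \<noteq> B" "B \<noteq> C" "A \<noteq> C" "A \<inter> B = {x}" "B \<inter> C = {y}" "C \<inter> A = {z}"
  shows "x \<noteq> y \<and> y \<noteq> z \<and> x \<noteq> z \<and> A = {x, z} \<and> B = {x, y} \<and> C = {y, z}"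
proof -
  have d: "x \<noteq> y" "y \<noteq> z" "x \<noteq> z"
  proof -
    show "x \<noteq> y" using no_common[OF assms(1-10), of x] assms(11-13) by blast
    show "y \<noteq> z" using no_common[OF assms(1-10), of y] assms(11-13) by blast
    show "x \<noteq> z" using no_common[OF assms(1-10), of x] assms(11-13) by blast
  qed
  have fin: "finite A" "finite B" "finite C" using assms(5-7) card_ge_0_finite by (metis zero_less_numeral)+
  have s: "{x, z} \<subseteq> A" "{x, y} \<subseteq> B" "{y, z} \<subseteq> C" using assms(11-13) by auto
  have k: "card {x, z} = 2" "card {x, y} = 2" "card {y, z} = 2" using d by auto
  have "{x, z} = A" by (rule card_subset_eq[OF fin(1) s(1)]) (simp only: k assms(5))
  moreover have "{x, y} = B" by (rule card_subset_eq[OF fin(2) s(2)]) (simp only: k assms(6))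
  moreover have "{y, z} = C" by (rule card_subset_eq[OF fin(3) s(3)]) (simp only: k assms(7))
  ultimately have "A = {x, z}" "B = {x, y}" "C = {y, z}" by auto
  then show ?thesis using d by blast
qed
theorem mainTheorem3:
  fixes T :: "pt set set" and m :: nat and r :: int and rr :: "pt set \<Rightarrow> int"
    and \<sigma> :: "pt set" and \<tau> :: "nat \<Rightarrow> pt set" and \<gamma> :: "nat \<Rightarrow> pt"
    and l :: "nat \<Rightarrow> bipoly" and head :: "pt set \<Rightarrow> pt"
  assumes "triangulation T"
    and "r \<ge> -1"
    and "smoothness_distribution T rr"
    and "\<forall>e\<in>int_edges T. rr e = r \<or> rr e = -1"
    and "\<sigma> \<in> T"
    and "\<forall>i<3. \<tau> i \<subseteq> \<sigma> \<and> card (\<tau> i) = 2 \<and> \<tau> i \<in> int_edges T \<and> rr (\<tau> i) = r"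
    and "\<tau> 0 \<noteq> \<tau> 1" and "\<tau> 1 \<noteq> \<tau> 2" and "\<tau> 0 \<noteq> \<tau> 2"
    and "\<forall>i<3. \<tau> i \<inter> \<tau> (Suc i mod 3) = {\<gamma> i} \<and> \<gamma> i \<in> int_vertices T"
    and "\<forall>e\<in>int_edges T. (\<exists>i<3. \<gamma> i \<in> e) \<longrightarrow> rr e \<noteq> -1"
    and "\<forall>i<3. l i \<in> Pm 1 \<and> l i \<notin> {[:[:c:]:] | c. True} \<and>
               (\<forall>p\<in>convex hull (\<tau> i). eval2 (l i) p = 0)"
    and "\<forall>e\<in>int_edges T. head e \<in> e"
  shows "quot_iso fsc psc (Pm3 m) (coker_rel m (\<lambda>i. J_vertex m T rr (\<gamma> i)))
           (Pm m) {g0 + g1 + g2 | g0 g1 g2. g0 \<in> J_vertex m T rr (\<gamma> 0) \<and>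
                     g1 \<in> J_vertex m T rr (\<gamma> 1) \<and> g2 \<in> J_vertex m T rr (\<gamma> 2)}
       \<and> quot_iso fsc psc
           (C0 m T (\<lambda>e. if e \<in> \<tau> ` {0,1,2} then -1 else rr e))
           (H0_rel m T head (\<lambda>e. if e \<in> \<tau> ` {0,1,2} then -1 else rr e) rr)
           (Pm m) {g0 + g1 + g2 | g0 g1 g2. g0 \<in> J_vertex m T rr (\<gamma> 0) \<and>
                     g1 \<in> J_vertex m T rr (\<gamma> 1) \<and> g2 \<in> J_vertex m T rr (\<gamma> 2)}"
proof -
  have cs: "card \<sigma> = 3" using assms(1,5) by (simp add: triangulation_def)
  have finT: "finite T" and c3: "\<And>x. x \<in> T \<Longrightarrow> card x = 3" using assms(1) by (auto simp: triangulation_def)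
  have "finite x" if "x \<in> T" for x
  proof -
    have "card x = 3" using c3 that .
    then show ?thesis by (intro card_ge_0_finite) simp
  qed
  then have finU: "finite (\<Union>T)" using finT by blast
  have "edges T \<subseteq> Pow (\<Union>T)" by (auto simp: edges_def)
  then have finEd: "finite (edges T)" using finU by (meson finite_Pow_iff finite_subset)
  have finE: "\<And>v. finite (edges_at T v)"
    using finEd by (rule finite_subset[rotated]) (auto simp: edges_at_def int_edges_def)
  have c2: "\<And>e. e \<in> int_edges T \<Longrightarrow> card e = 2" by (auto simp: int_edges_def edges_def)
  have c2': "\<And>v e. e \<in> edges_at T v \<Longrightarrow> card e = 2" using c2 by (auto simp: edges_at_def)
  have ti0: "\<tau> 0 \<subseteq> \<sigma>" "card (\<tau> 0) = 2" "\<tau> 0 \<in> int_edges T" using assms(6) by auto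
  have ti1: "\<tau> 1 \<subseteq> \<sigma>" "card (\<tau> 1) = 2" "\<tau> 1 \<in> int_edges T" using assms(6) by auto
  have ti2: "\<tau> 2 \<subseteq> \<sigma>" "card (\<tau> 2) = 2" "\<tau> 2 \<in> int_edges T" using assms(6) by auto
  have g0: "\<tau> 0 \<inter> \<tau> 1 = {\<gamma> 0}" "\<gamma> 0 \<in> int_vertices T" using assms(10)[rule_format, of 0] by simp_all
  have g1: "\<tau> 1 \<inter> \<tau> 2 = {\<gamma> 1}" "\<gamma> 1 \<in> int_vertices T" using assms(10)[rule_format, of 1] by (simp_all add: numeral_2_eq_2)
  have g2: "\<tau> 2 \<inter> \<tau> 0 = {\<gamma> 2}" "\<gamma> 2 \<in> int_vertices T" using assms(10)[rule_format, of 2] by simp_all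
  have cfg: "\<gamma> 0 \<noteq> \<gamma> 1 \<and> \<gamma> 1 \<noteq> \<gamma> 2 \<and> \<gamma> 0 \<noteq> \<gamma> 2 \<and> \<tau> 0 = {\<gamma> 0, \<gamma> 2} \<and> \<tau> 1 = {\<gamma> 0, \<gamma> 1} \<and> \<tau> 2 = {\<gamma> 1, \<gamma> 2}"
    by (rule config[OF cs ti0(1) ti1(1) ti2(1) ti0(2) ti1(2) ti2(2) assms(7,8,9) g0(1) g1(1) g2(1)])
  have hd: "head (\<tau> 0) \<in> \<tau> 0" "head (\<tau> 1) \<in> \<tau> 1" "head (\<tau> 2) \<in> \<tau> 2"
    using assms(13) ti0(3) ti1(3) ti2(3) by auto
  have P1: "quot_iso fsc psc (Pm3 m) (coker_rel m (\<lambda>i. J_vertex m T rr (\<gamma> i)))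
           (Pm m) {g0 + g1 + g2 | g0 g1 g2. g0 \<in> J_vertex m T rr (\<gamma> 0) \<and>
                     g1 \<in> J_vertex m T rr (\<gamma> 1) \<and> g2 \<in> J_vertex m T rr (\<gamma> 2)}"
    using part1[of "\<lambda>i. J_vertex m T rr (\<gamma> i)" m] J_vertex_zero[OF c2'] J_vertex_Pm by simp
  have P2: "quot_iso fsc psc
           (C0 m T (\<lambda>e. if e \<in> \<tau> ` {0,1,2} then -1 else rr e))
           (H0_rel m T head (\<lambda>e. if e \<in> \<tau> ` {0,1,2} then -1 else rr e) rr)
           (Pm m) {g0 + g1 + g2 | g0 g1 g2. g0 \<in> J_vertex m T rr (\<gamma> 0) \<and>
                     g1 \<in> J_vertex m T rr (\<gamma> 1) \<and> g2 \<in> J_vertex m T rr (\<gamma> 2)}"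
    using cfg by (intro part2 finE c2 ti0(3) ti1(3) ti2(3) assms(7,8,9) g0(2) g1(2) g2(2) hd) auto
  show ?thesis using P1 P2 by blast
qed

end
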